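(* Let $k\in\mathbb N$, $n=8k$, $|G\rangle$ the $n$-qubit fully-connected graph state, $\rho=\mathcal E^{\otimes n}(|G\rangle\langle G|)$ with $\mathcal E$ the depolarizing channel of error probability $p$, $F=\langle G|\rho|G\rangle$ and $F_{\rm est}=(1-\tfrac43p)^{6k}$. Then for all $0\le p\le3/4$, $$0\le F-F_{\rm est}<\frac12\Big(1-\frac1{8k}\Big)\Big(1-\frac1{4k}\Big)^{8k-2}+\frac12\Big(\frac23\Big)^{8k}+\frac1{3k},$$ and the right-hand side decreases monotonically in $k$ and converges to $1/(2e^2)$ as $k\to\infty$.
   Context: Graph state $|G\rangle=\big(\prod_{(i,j)\in E}CZ_{i,j}\big)|+\rangle^{\otimes n}$; the fully-connected graph has an edge between every pair of distinct vertices. Depolarizing channel: $\mathcal E(\cdot)=(1-p)(\cdot)+\frac p3[X(\cdot)X+Y(\cdot)Y+Z(\cdot)Z]$, applied independently to each qubit. *)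

theory Defs
  imports Complex_Main
begin

text \<open>n-qubit states: computational basis states are indexed by subsets x of {..<n}
  (x = set of qubits in state |1>). Vectors: nat set => complex; operators / density
  matrices: nat set => nat set => complex (row index, column index).\<close>

definition basis :: "nat \<Rightarrow> nat set set" where
  "basis n = Pow {..<n}"

definition plus_state :: "nat \<Rightarrow> nat set \<Rightarrow> complex" where
  "plus_state n x = complex_of_real (1 / sqrt (2 ^ n))"

definition cz :: "nat \<Rightarrow> nat \<Rightarrow> (nat set \<Rightarrow> complex) \<Rightarrow> nat set \<Rightarrow> complex" where
  "cz i j \<psi> x = (if i \<in> x \<and> j \<in> x then - \<psi> x else \<psi> x)"

definition graph_state :: "nat \<Rightarrow> (nat \<times> nat) list \<Rightarrow> nat set \<Rightarrow> complex" where
  "graph_state n E = fold (\<lambda>(i, j) \<psi>. cz i j \<psi>) E (plus_state n)"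

definition complete_edges :: "nat \<Rightarrow> (nat \<times> nat) list" where
  "complete_edges n = concat (map (\<lambda>i. map (\<lambda>j. (i, j)) [Suc i..<n]) [0..<n])"

definition pure_dm :: "(nat set \<Rightarrow> complex) \<Rightarrow> nat set \<Rightarrow> nat set \<Rightarrow> complex" where
  "pure_dm \<psi> x y = \<psi> x * cnj (\<psi> y)"

text \<open>Single-qubit Pauli matrices, indexed by (output bit, input bit);
  1 = X, 2 = Y, 3 = Z, anything else = identity.\<close>
definition pauli :: "nat \<Rightarrow> bool \<Rightarrow> bool \<Rightarrow> complex" where
  "pauli s a b =
     (if s = 1 then (if a \<noteq> b then 1 else 0)
      else if s = 2 then (if a \<and> \<not> b then \<i> else if \<not> a \<and> b then - \<i> else 0)
      else if s = 3 then (if a = b then (if a then -1 else 1) else 0)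
      else (if a = b then 1 else 0))"

definition local_op :: "nat \<Rightarrow> (bool \<Rightarrow> bool \<Rightarrow> complex) \<Rightarrow> nat set \<Rightarrow> nat set \<Rightarrow> complex" where
  "local_op q M x y = (if x - {q} = y - {q} then M (q \<in> x) (q \<in> y) else 0)"

definition conj_by :: "nat \<Rightarrow> (nat set \<Rightarrow> nat set \<Rightarrow> complex) \<Rightarrow> (nat set \<Rightarrow> nat set \<Rightarrow> complex)
    \<Rightarrow> nat set \<Rightarrow> nat set \<Rightarrow> complex" where
  "conj_by n A \<rho> x y = (\<Sum>u\<in>basis n. \<Sum>v\<in>basis n. A x u * \<rho> u v * cnj (A y v))"

definition depol :: "real \<Rightarrow> nat \<Rightarrow> nat \<Rightarrow> (nat set \<Rightarrow> nat set \<Rightarrow> complex) \<Rightarrow> nat set \<Rightarrow> nat set \<Rightarrow> complex" where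
  "depol p n q \<rho> x y = complex_of_real (1 - p) * \<rho> x y
      + complex_of_real (p / 3) * (\<Sum>s\<in>{1,2,3}. conj_by n (local_op q (pauli s)) \<rho> x y)"

definition depol_all :: "real \<Rightarrow> nat \<Rightarrow> (nat set \<Rightarrow> nat set \<Rightarrow> complex) \<Rightarrow> nat set \<Rightarrow> nat set \<Rightarrow> complex" where
  "depol_all p n \<rho> = fold (depol p n) [0..<n] \<rho>"

definition expval :: "nat \<Rightarrow> (nat set \<Rightarrow> complex) \<Rightarrow> (nat set \<Rightarrow> nat set \<Rightarrow> complex) \<Rightarrow> complex" where
  "expval n \<psi> \<rho> = (\<Sum>x\<in>basis n. \<Sum>y\<in>basis n. cnj (\<psi> x) * \<rho> x y * \<psi> y)"

definition fidelity_full :: "nat \<Rightarrow> real \<Rightarrow> complex" where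
  "fidelity_full n p =
     (let G = graph_state n (complete_edges n) in expval n G (depol_all p n (pure_dm G)))"

definition F_est :: "nat \<Rightarrow> real \<Rightarrow> real" where
  "F_est k p = (1 - 4/3 * p) ^ (6 * k)"

definition bound7 :: "nat \<Rightarrow> real" where
  "bound7 k = 1/2 * (1 - 1 / (8 * real k)) * (1 - 1 / (4 * real k)) ^ (8 * k - 2)
             + 1/2 * (2/3) ^ (8 * k) + 1 / (3 * real k)"

end

theory Submission
  imports Defs "HOL-Real_Asymp.Real_Asymp" "HOL-Analysis.Complex_Transcendental"
begin


definition sg :: "nat set \<Rightarrow> complex" where "sg z = (-1) ^ (card z choose 2)"

lemma fold_cz: "fold (\<lambda>(i, j) \<psi>. cz i j \<psi>) E \<psi>0 x
   = (-1) ^ length (filter (\<lambda>(i,j). i \<in> x \<and> j \<in> x) E) * \<psi>0 x"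
proof (induction E arbitrary: \<psi>0)
  case Nil then show ?case by simp
next
  case (Cons e E)
  obtain i j where e: "e = (i,j)" by (cases e)
  show ?case using Cons[of "cz i j \<psi>0"] by (simp add: e cz_def)
qed

definition cnt :: "nat set \<Rightarrow> nat \<Rightarrow> nat" where
 "cnt x n = length (filter (\<lambda>(i,j). i \<in> x \<and> j \<in> x) (complete_edges n))"

lemma cnt_sum: "cnt x n = (\<Sum>i<n. if i \<in> x then card (x \<inter> {Suc i..<n}) else 0)"
proof -
  have "cnt x n = sum_list (map (\<lambda>i. length (filter (\<lambda>(i,j). i \<in> x \<and> j \<in> x) (map (\<lambda>j. (i, j)) [Suc i..<n]))) [0..<n])"
    unfolding cnt_def complete_edges_def by (simp add: filter_concat length_concat comp_def)
  also have "\<dots> = (\<Sum>i<n. length (filter (\<lambda>(i,j). i \<in> x \<and> j \<in> x) (map (\<lambda>j. (i, j)) [Suc i..<n])))"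
    by (simp add: sum_set_upt_conv_sum_list_nat[symmetric] atLeast0LessThan)
  also have "\<dots> = (\<Sum>i<n. if i \<in> x then card (x \<inter> {Suc i..<n}) else 0)"
  proof (rule sum.cong[OF refl])
    fix i
    show "length (filter (\<lambda>(i,j). i \<in> x \<and> j \<in> x) (map (\<lambda>j. (i, j)) [Suc i..<n]))
        = (if i \<in> x then card (x \<inter> {Suc i..<n}) else 0)"
    proof (cases "i \<in> x")
      case True
      have "length (filter (\<lambda>(i,j). i \<in> x \<and> j \<in> x) (map (\<lambda>j. (i, j)) [Suc i..<n]))
          = length (filter (\<lambda>j. j \<in> x) [Suc i..<n])"
        using True by (simp add: filter_map comp_def)
      also have "\<dots> = card ({j. j \<in> x} \<inter> set [Suc i..<n])"
        by (rule distinct_length_filter) simp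
      finally show ?thesis using True by (simp add: Collect_mem_eq)
    next
      case False
      then show ?thesis by (simp add: filter_map comp_def)
    qed
  qed
  finally show ?thesis .
qed

lemma cnt_closed: "cnt x n = card (x \<inter> {..<n}) choose 2"
proof (induction n)
  case 0 then show ?case by (simp add: cnt_sum)
next
  case (Suc n)
  have r: "card (x \<inter> {Suc i..<Suc n}) = card (x \<inter> {Suc i..<n}) + (if n \<in> x then 1 else 0)"
    if "i < n" for i
  proof -
    have "x \<inter> {Suc i..<Suc n} = (x \<inter> {Suc i..<n}) \<union> (if n \<in> x then {n} else {})"
      using that by (auto simp: less_Suc_eq)
    then show ?thesis by (auto simp: card_insert_if)
  qed
  have "cnt x (Suc n) = (\<Sum>i<n. if i \<in> x then card (x \<inter> {Suc i..<Suc n}) else 0)"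
    by (simp add: cnt_sum)
  also have "\<dots> = (\<Sum>i<n. (if i \<in> x then card (x \<inter> {Suc i..<n}) else 0) + (if i \<in> x \<and> n \<in> x then 1 else 0))"
    by (rule sum.cong[OF refl]) (auto simp: r)
  also have "\<dots> = cnt x n + (\<Sum>i<n. if i \<in> x \<and> n \<in> x then 1 else 0)"
    by (simp add: sum.distrib cnt_sum)
  also have "(\<Sum>i<n. if i \<in> x \<and> n \<in> x then 1 else 0) = (if n \<in> x then card (x \<inter> {..<n}) else 0)"
  proof (cases "n \<in> x")
    case True
    have "(\<Sum>i<n. if i \<in> x then 1 else 0) = card ({..<n} \<inter> {i. i \<in> x})"
      by (simp add: sum.inter_restrict[symmetric])
    then show ?thesis using True by (simp add: Int_commute Collect_mem_eq)
  qed simp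
  also have "card (x \<inter> {..<Suc n}) = card (x \<inter> {..<n}) + (if n \<in> x then 1 else 0)"
  proof -
    have "x \<inter> {..<Suc n} = (x \<inter> {..<n}) \<union> (if n \<in> x then {n} else {})"
      by (auto simp: lessThan_Suc)
    then show ?thesis by (auto simp: card_insert_if)
  qed
  ultimately show ?case using Suc by (simp add: numeral_2_eq_2)
qed

lemma graph_state_eq:
  assumes "x \<subseteq> {..<n}"
  shows "graph_state n (complete_edges n) x = sg x * plus_state n x"
proof -
  have "x \<inter> {..<n} = x" using assms by auto
  then show ?thesis
    unfolding graph_state_def fold_cz sg_def using cnt_closed[of x n] by (simp add: cnt_def)
qed

definition fl :: "nat \<Rightarrow> nat set \<Rightarrow> nat set" where
  "fl q z = (if q \<in> z then z - {q} else insert q z)"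

lemma fl_basis: "z \<in> basis n \<Longrightarrow> q < n \<Longrightarrow> fl q z \<in> basis n"
  by (auto simp: fl_def basis_def)

lemma fl_neq: "fl q z \<noteq> z"
  by (auto simp: fl_def)

lemma fl_mem: "(q \<in> fl q z) = (q \<notin> z)"
  by (auto simp: fl_def)

lemma fl_minus: "fl q z - {q} = z - {q}"
  by (auto simp: fl_def)

lemma eq_minus_cases: "x - {q} = u - {q} \<Longrightarrow> u = x \<or> u = fl q x"
  unfolding fl_def by (cases "q \<in> x"; cases "q \<in> u") (auto simp: set_eq_iff; metis)+

lemma two_sum:
  assumes "x \<in> basis n" "q < n" "\<And>u. u \<in> basis n \<Longrightarrow> u \<noteq> x \<Longrightarrow> u \<noteq> fl q x \<Longrightarrow> g u = 0"
  shows "(\<Sum>u\<in>basis n. g u) = g x + g (fl q x)"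
proof -
  have "(\<Sum>u\<in>basis n. g u) = (\<Sum>u\<in>{x, fl q x}. g u)"
    by (rule sum.mono_neutral_right) (use assms fl_basis in \<open>auto simp: basis_def\<close>)
  also have "\<dots> = g x + g (fl q x)" using fl_neq[of q x] by simp
  finally show ?thesis .
qed

lemma local_sum_left:
  assumes "x \<in> basis n" "q < n"
  shows "(\<Sum>u\<in>basis n. local_op q M x u * f u) = M (q\<in>x) (q\<in>x) * f x + M (q\<in>x) (q\<notin>x) * f (fl q x)"
proof -
  have "(\<Sum>u\<in>basis n. local_op q M x u * f u) = local_op q M x x * f x + local_op q M x (fl q x) * f (fl q x)"
    by (rule two_sum[OF assms]) (auto simp: local_op_def dest: eq_minus_cases)
  then show ?thesis by (simp add: local_op_def fl_minus fl_mem)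
qed

lemma local_sum_right:
  assumes "y \<in> basis n" "q < n"
  shows "(\<Sum>v\<in>basis n. f v * cnj (local_op q M y v)) = f y * cnj (M (q\<in>y) (q\<in>y)) + f (fl q y) * cnj (M (q\<in>y) (q\<notin>y))"
proof -
  have "(\<Sum>v\<in>basis n. f v * cnj (local_op q M y v)) = f y * cnj (local_op q M y y) + f (fl q y) * cnj (local_op q M y (fl q y))"
    by (rule two_sum[OF assms]) (auto simp: local_op_def dest: eq_minus_cases)
  then show ?thesis by (simp add: local_op_def fl_minus fl_mem)
qed

lemma conj_local:
  assumes "x \<in> basis n" "y \<in> basis n" "q < n"
  shows "conj_by n (local_op q M) \<rho> x y =
    M (q\<in>x) (q\<in>x) * (\<rho> x y * cnj (M (q\<in>y) (q\<in>y)) + \<rho> x (fl q y) * cnj (M (q\<in>y) (q\<notin>y)))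
  + M (q\<in>x) (q\<notin>x) * (\<rho> (fl q x) y * cnj (M (q\<in>y) (q\<in>y)) + \<rho> (fl q x) (fl q y) * cnj (M (q\<in>y) (q\<notin>y)))"
proof -
  have "conj_by n (local_op q M) \<rho> x y = (\<Sum>u\<in>basis n. local_op q M x u * (\<Sum>v\<in>basis n. \<rho> u v * cnj (local_op q M y v)))"
    unfolding conj_by_def by (simp add: sum_distrib_left mult.assoc)
  also have "\<dots> = M (q\<in>x) (q\<in>x) * (\<Sum>v\<in>basis n. \<rho> x v * cnj (local_op q M y v))
       + M (q\<in>x) (q\<notin>x) * (\<Sum>v\<in>basis n. \<rho> (fl q x) v * cnj (local_op q M y v))"
    by (rule local_sum_left[OF assms(1,3)])
  finally show ?thesis by (simp add: local_sum_right[OF assms(2,3)])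
qed

lemma depol_eq:
  assumes "x \<in> basis n" "y \<in> basis n" "q < n"
  shows "depol p n q \<rho> x y = (if (q \<in> x) = (q \<in> y)
      then complex_of_real (1 - 2*p/3) * \<rho> x y + complex_of_real (2*p/3) * \<rho> (fl q x) (fl q y)
      else complex_of_real (1 - 4*p/3) * \<rho> x y)"
proof -
  have "depol p n q \<rho> x y = complex_of_real (1 - p) * \<rho> x y
      + complex_of_real (p / 3) * (conj_by n (local_op q (pauli 1)) \<rho> x y
         + conj_by n (local_op q (pauli 2)) \<rho> x y + conj_by n (local_op q (pauli 3)) \<rho> x y)"
    unfolding depol_def by (simp add: add.assoc)
  also have "\<dots> = (if (q \<in> x) = (q \<in> y)
      then complex_of_real (1 - 2*p/3) * \<rho> x y + complex_of_real (2*p/3) * \<rho> (fl q x) (fl q y)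
      else complex_of_real (1 - 4*p/3) * \<rho> x y)"
    unfolding conj_local[OF assms]
    by (cases "q \<in> x"; cases "q \<in> y") (simp_all add: pauli_def algebra_simps of_real_diff)
  finally show ?thesis .
qed

definition sd :: "nat set \<Rightarrow> nat set \<Rightarrow> nat set" where
  "sd x y = (x - y) \<union> (y - x)"

lemma sd_fl: "(q \<in> x) = (q \<in> y) \<Longrightarrow> sd (fl q x) (fl q y) = sd x y"
  unfolding sd_def fl_def by auto

lemma sd_fl_diff: "(q \<in> x) \<noteq> (q \<in> y) \<Longrightarrow> q \<in> sd x y"
  unfolding sd_def by auto

lemma sd_basis: "x \<in> basis n \<Longrightarrow> y \<in> basis n \<Longrightarrow> sd x y \<subseteq> {..<n}"
  unfolding sd_def basis_def by auto

definition gg :: "real \<Rightarrow> nat \<Rightarrow> nat set \<Rightarrow> nat set \<Rightarrow> real" where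
  "gg c m x y = (if even (card (sd x y)) then c ^ card (sd x y \<inter> {..<m}) else c ^ m)"

lemma fold_inv:
  fixes \<rho>0 :: "nat set \<Rightarrow> nat set \<Rightarrow> complex"
  assumes H: "\<And>q x y. q < n \<Longrightarrow> x \<in> basis n \<Longrightarrow> y \<in> basis n \<Longrightarrow> (q \<in> x) = (q \<in> y) \<Longrightarrow>
      \<rho>0 (fl q x) (fl q y) = (-1) ^ card (sd x y) * \<rho>0 x y"
  shows "m \<le> n \<Longrightarrow> x \<in> basis n \<Longrightarrow> y \<in> basis n \<Longrightarrow>
     fold (depol p n) [0..<m] \<rho>0 x y = \<rho>0 x y * complex_of_real (gg (1 - 4*p/3) m x y)"
proof (induction m arbitrary: x y)
  case 0 then show ?case by (simp add: gg_def)
next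
  case (Suc m)
  define c where "c = 1 - 4*p/3"
  define R where "R = fold (depol p n) [0..<m] \<rho>0"
  have mn: "m < n" using Suc by simp
  have IH: "\<And>x y. x \<in> basis n \<Longrightarrow> y \<in> basis n \<Longrightarrow> R x y = \<rho>0 x y * complex_of_real (gg c m x y)"
    using Suc unfolding R_def c_def by simp
  have fin: "finite (sd x y)" using sd_basis[OF Suc(3,4)] finite_subset by blast
  have "fold (depol p n) [0..<Suc m] \<rho>0 x y = depol p n m R x y"
    unfolding R_def by simp
  also have "\<dots> = \<rho>0 x y * complex_of_real (gg c (Suc m) x y)"
  proof (cases "(m \<in> x) = (m \<in> y)")
    case True
    have sdm: "m \<notin> sd x y" using True unfolding sd_def by auto
    have g1: "gg c m (fl m x) (fl m y) = gg c m x y" unfolding gg_def sd_fl[OF True] ..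
    have real_id: "(1 - 2*p/3) * gg c m x y + (2*p/3) * ((-1) ^ card (sd x y) * gg c m x y) = gg c (Suc m) x y"
    proof (cases "even (card (sd x y))")
      case True
      have "sd x y \<inter> {..<Suc m} = sd x y \<inter> {..<m}" using sdm by (auto simp: lessThan_Suc)
      then show ?thesis using True unfolding gg_def by (simp add: algebra_simps)
    next
      case False
      then show ?thesis unfolding gg_def c_def by (simp add: algebra_simps)
    qed
    have "depol p n m R x y = complex_of_real (1 - 2*p/3) * R x y + complex_of_real (2*p/3) * R (fl m x) (fl m y)"
      using depol_eq[OF Suc(3,4) mn] True by simp
    also have "\<dots> = complex_of_real (1 - 2*p/3) * (\<rho>0 x y * complex_of_real (gg c m x y))
       + complex_of_real (2*p/3) * ((-1) ^ card (sd x y) * \<rho>0 x y * complex_of_real (gg c m x y))"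
      using IH[OF Suc(3,4)] IH[OF fl_basis[OF Suc(3) mn] fl_basis[OF Suc(4) mn]] g1 H[OF mn Suc(3,4) True]
      by simp
    also have "\<dots> = \<rho>0 x y * complex_of_real ((1 - 2*p/3) * gg c m x y + (2*p/3) * ((-1) ^ card (sd x y) * gg c m x y))"
      by (simp add: algebra_simps)
    also have "\<dots> = \<rho>0 x y * complex_of_real (gg c (Suc m) x y)" using real_id by simp
    finally show ?thesis .
  next
    case False
    have sdm: "m \<in> sd x y" using sd_fl_diff[OF False] .
    have real_id: "c * gg c m x y = gg c (Suc m) x y"
    proof (cases "even (card (sd x y))")
      case True
      have "sd x y \<inter> {..<Suc m} = insert m (sd x y \<inter> {..<m})" using sdm by (auto simp: lessThan_Suc)
      moreover have "finite (sd x y \<inter> {..<m})" by simp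
      ultimately have "card (sd x y \<inter> {..<Suc m}) = Suc (card (sd x y \<inter> {..<m}))" by simp
      then show ?thesis using True unfolding gg_def by simp
    next
      case False
      then show ?thesis unfolding gg_def by simp
    qed
    have "depol p n m R x y = complex_of_real c * R x y"
      using depol_eq[OF Suc(3,4) mn] False unfolding c_def by simp
    also have "\<dots> = \<rho>0 x y * complex_of_real (c * gg c m x y)"
      using IH[OF Suc(3,4)] by (simp add: algebra_simps)
    finally show ?thesis using real_id by simp
  qed
  finally show ?case unfolding c_def .
qed

lemma sg_insert: "finite z \<Longrightarrow> q \<notin> z \<Longrightarrow> sg (insert q z) = sg z * (-1) ^ card z"
  unfolding sg_def by (simp add: numeral_2_eq_2 power_add)

lemma sg_sq: "sg z * sg z = 1"
  unfolding sg_def by (simp flip: power_add add: mult_2[symmetric] power_mult)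

lemma cnj_sg: "cnj (sg z) = sg z"
  unfolding sg_def by simp

lemma card_sd: "finite x \<Longrightarrow> finite y \<Longrightarrow> card x + card y = card (sd x y) + 2 * card (x \<inter> y)"
proof -
  assume f: "finite x" "finite y"
  have "card x = card (x - y) + card (x \<inter> y)"
    using f by (metis card_Diff_subset_Int Diff_Diff_Int Diff_subset card_Diff_subset card_mono
      Int_lower1 add.commute le_add_diff_inverse finite_Int)
  moreover have "card y = card (y - x) + card (x \<inter> y)"
    using f by (metis card_Diff_subset_Int Diff_Diff_Int Diff_subset card_Diff_subset card_mono
      Int_lower2 add.commute le_add_diff_inverse finite_Int Int_commute)
  moreover have "card (sd x y) = card (x - y) + card (y - x)"
    unfolding sd_def using f by (intro card_Un_disjoint) auto
  ultimately show ?thesis by simp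
qed

lemma sign_sd: "finite x \<Longrightarrow> finite y \<Longrightarrow> (-1::complex) ^ (card x + card y) = (-1) ^ card (sd x y)"
  by (simp add: card_sd power_add power_mult)

lemma sg_pair_ins:
  assumes "finite x" "finite y" "q \<notin> x" "q \<notin> y"
  shows "sg (insert q x) * sg (insert q y) = (-1) ^ card (sd x y) * (sg x * sg y)"
  using assms by (simp add: sg_insert sign_sd[symmetric] power_add algebra_simps)

lemma sg_pair_fl:
  assumes "finite x" "finite y" "(q \<in> x) = (q \<in> y)"
  shows "sg (fl q x) * sg (fl q y) = (-1) ^ card (sd x y) * (sg x * sg y)"
proof (cases "q \<in> x")
  case False
  then show ?thesis using assms sg_pair_ins[OF assms(1,2)] by (simp add: fl_def)
next
  case True
  define x' where "x' = x - {q}"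
  define y' where "y' = y - {q}"
  have xx: "x = insert q x'" "y = insert q y'" using True assms unfolding x'_def y'_def by auto
  have sdd: "sd x y = sd x' y'" unfolding sd_def x'_def y'_def using True assms(3) by auto
  have e: "sg x * sg y = (-1) ^ card (sd x y) * (sg x' * sg y')"
  proof -
    have "sg (insert q x') * sg (insert q y') = (-1) ^ card (sd x' y') * (sg x' * sg y')"
      by (rule sg_pair_ins) (auto simp: x'_def y'_def assms)
    then show ?thesis using xx sdd by simp
  qed
  have sq: "(-1::complex) ^ card (sd x y) * (-1) ^ card (sd x y) = 1"
    by (simp flip: power_add add: mult_2[symmetric] power_mult)
  have "sg (fl q x) * sg (fl q y) = sg x' * sg y'"
    using True assms unfolding fl_def x'_def y'_def by simp
  also have "\<dots> = (-1) ^ card (sd x y) * (sg x * sg y)"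
    unfolding e by (simp add: sq mult.assoc[symmetric])
  finally show ?thesis .
qed

lemma basis_finite: "x \<in> basis n \<Longrightarrow> finite x"
  unfolding basis_def by (auto intro: finite_subset)

lemma rho0_eq:
  assumes "x \<in> basis n" "y \<in> basis n"
  shows "pure_dm (graph_state n (complete_edges n)) x y = sg x * sg y * (complex_of_real (1 / sqrt (2 ^ n)))^2"
  using assms unfolding pure_dm_def
  by (simp add: graph_state_eq basis_def plus_state_def cnj_sg power2_eq_square algebra_simps)

lemma H_rho0:
  assumes "q < n" "x \<in> basis n" "y \<in> basis n" "(q \<in> x) = (q \<in> y)"
  shows "pure_dm (graph_state n (complete_edges n)) (fl q x) (fl q y)
      = (-1) ^ card (sd x y) * pure_dm (graph_state n (complete_edges n)) x y"
  unfolding rho0_eq[OF fl_basis[OF assms(2,1)] fl_basis[OF assms(3,1)]] rho0_eq[OF assms(2,3)]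
  using sg_pair_fl[OF basis_finite[OF assms(2)] basis_finite[OF assms(3)] assms(4)]
  by (simp add: algebra_simps)

lemma pow_sum: "(\<Sum>D\<in>Pow {..<n}. (z::real) ^ card D) = (1+z)^n"
proof (induction n)
  case 0 then show ?case by simp
next
  case (Suc n)
  have P: "Pow {..<Suc n} = Pow {..<n} \<union> insert n ` Pow {..<n}"
    by (simp add: lessThan_Suc Pow_insert)
  have disj: "Pow {..<n} \<inter> insert n ` Pow {..<n} = {}" by auto
  have inj: "inj_on (insert n) (Pow {..<n})"
    unfolding inj_on_def by (metis PowD insert_ident lessThan_iff order_less_irrefl subsetD)
  have "(\<Sum>D\<in>Pow {..<Suc n}. z ^ card D) = (\<Sum>D\<in>Pow {..<n}. z ^ card D) + (\<Sum>D\<in>insert n ` Pow {..<n}. z ^ card D)"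
    unfolding P by (rule sum.union_disjoint) (use disj in auto)
  also have "(\<Sum>D\<in>insert n ` Pow {..<n}. z ^ card D) = (\<Sum>D\<in>Pow {..<n}. z ^ card (insert n D))"
    by (rule sum.reindex[OF inj, unfolded comp_def])
  also have "\<dots> = (\<Sum>D\<in>Pow {..<n}. z * z ^ card D)"
  proof (rule sum.cong[OF refl])
    fix D assume "D \<in> Pow {..<n}"
    then have "finite D" "n \<notin> D" by (auto intro: finite_subset)
    then show "z ^ card (insert n D) = z * z ^ card D" by simp
  qed
  also have "\<dots> = z * (1+z)^n" by (simp add: sum_distrib_left[symmetric] Suc)
  finally show ?case using Suc by (simp add: algebra_simps)
qed

lemma sum_h:
  assumes "n \<ge> 1"
  shows "(\<Sum>D\<in>Pow {..<n}. (if even (card D) then c ^ card D else (c::real) ^ n))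
        = ((1+c)^n + (1-c)^n)/2 + c^n * 2^n / 2"
proof -
  have pt: "(if even d then c ^ d else c ^ n) = c ^ d / 2 + (-c) ^ d / 2 + (c^n/2 - c^n/2 * (-1) ^ d)" for d :: nat
    by (cases "even d") (simp_all add: power_minus_odd)
  have s1: "(\<Sum>D\<in>Pow {..<n}. c ^ card D / 2) = (1+c)^n/2"
    by (simp add: sum_divide_distrib[symmetric] pow_sum)
  have s2: "(\<Sum>D\<in>Pow {..<n}. (-c) ^ card D / 2) = (1-c)^n/2"
    by (simp add: sum_divide_distrib[symmetric] pow_sum)
  have s3: "(\<Sum>D\<in>Pow {..<n}. c^n/2) = c^n * 2^n / 2"
    by (simp add: card_Pow)
  have s4: "(\<Sum>D\<in>Pow {..<n}. c^n/2 * (-1) ^ card D) = 0"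
  proof -
    have z: "(\<Sum>D\<in>Pow {..<n}. (-1::real) ^ card D) = 0"
      using pow_sum[where z="-1" and n=n] assms by (simp add: power_0_left)
    have "(\<Sum>D\<in>Pow {..<n}. c^n/2 * (-1) ^ card D) = c^n/2 * (\<Sum>D\<in>Pow {..<n}. (-1) ^ card D)"
      by (rule sum_distrib_left[symmetric])
    then show ?thesis using z by simp
  qed
  have "(\<Sum>D\<in>Pow {..<n}. (if even (card D) then c ^ card D else c ^ n))
      = (\<Sum>D\<in>Pow {..<n}. c ^ card D / 2 + (-c) ^ card D / 2 + (c^n/2 - c^n/2 * (-1) ^ card D))"
    unfolding pt ..
  also have "\<dots> = ((1+c)^n + (1-c)^n)/2 + c^n * 2^n / 2"
    unfolding sum.distrib sum_subtractf s1 s2 s3 s4 by simp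
  finally show ?thesis .
qed

lemma sd_sd: "sd x (sd x y) = y"
  unfolding sd_def by auto

lemma sum_y:
  assumes "x \<in> basis n"
  shows "(\<Sum>y\<in>basis n. h (card (sd x y))) = (\<Sum>D\<in>basis n. h (card D))"
  by (rule sum.reindex_bij_witness[of _ "sd x" "sd x"])
     (use assms in \<open>auto simp: sd_sd basis_def sd_def\<close>)

lemma fidelity_closed:
  assumes "n \<ge> 1"
  shows "fidelity_full n p = complex_of_real
     ((((1 + (1 - 4*p/3))/2)^n + ((1 - (1 - 4*p/3))/2)^n + (1 - 4*p/3)^n)/2)"
proof -
  define c where "c = 1 - 4*p/3"
  define G where "G = graph_state n (complete_edges n)"
  define \<kappa> where "\<kappa> = 1 / sqrt (2 ^ n :: real)"
  define h where "h d = (if even d then c ^ d else c ^ n)" for d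
  have k2: "\<kappa>^2 = 1 / 2^n" unfolding \<kappa>_def by (simp add: power_divide)
  have Gx: "G x = sg x * complex_of_real \<kappa>" if "x \<in> basis n" for x
    using that unfolding G_def \<kappa>_def by (simp add: graph_state_eq basis_def plus_state_def)
  have fold: "fold (depol p n) [0..<n] (pure_dm G) x y = pure_dm G x y * complex_of_real (gg c n x y)"
    if "x \<in> basis n" "y \<in> basis n" for x y
    unfolding G_def c_def by (rule fold_inv[OF H_rho0]) (use that in auto)
  have gh: "gg c n x y = h (card (sd x y))" if "x \<in> basis n" "y \<in> basis n" for x y
  proof -
    have "sd x y \<inter> {..<n} = sd x y" using sd_basis[OF that] by auto
    then show ?thesis unfolding gg_def h_def by simp
  qed
  have tm: "cnj (G x) * fold (depol p n) [0..<n] (pure_dm G) x y * G y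
       = complex_of_real (h (card (sd x y)) / (2^n)^2)"
    if "x \<in> basis n" "y \<in> basis n" for x y
  proof -
    have "cnj (G x) * fold (depol p n) [0..<n] (pure_dm G) x y * G y
      = (sg x * sg x) * (sg y * sg y) * complex_of_real (\<kappa>^2 * \<kappa>^2 * gg c n x y)"
      unfolding fold[OF that] rho0_eq[OF that, folded G_def \<kappa>_def] Gx[OF that(1)] Gx[OF that(2)]
      by (simp add: cnj_sg power2_eq_square algebra_simps)
    also have "\<dots> = complex_of_real (h (card (sd x y)) / (2^n)^2)"
      unfolding sg_sq k2 gh[OF that] by (simp add: power2_eq_square)
    finally show ?thesis .
  qed
  have "fidelity_full n p = (\<Sum>x\<in>basis n. \<Sum>y\<in>basis n. complex_of_real (h (card (sd x y)) / (2^n)^2))"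
    unfolding fidelity_full_def Let_def depol_all_def expval_def G_def[symmetric]
    by (intro sum.cong refl tm)
  also have "\<dots> = complex_of_real (\<Sum>x\<in>basis n. \<Sum>y\<in>basis n. h (card (sd x y)) / (2^n)^2)"
    by simp
  also have "(\<Sum>x\<in>basis n. \<Sum>y\<in>basis n. h (card (sd x y)) / (2^n)^2)
      = (\<Sum>x\<in>basis n. (\<Sum>D\<in>basis n. h (card D)) / (2^n)^2)"
    by (intro sum.cong refl) (simp add: sum_divide_distrib[symmetric] sum_y)
  also have "\<dots> = 2^n * (((1+c)^n + (1-c)^n)/2 + c^n * 2^n / 2) / (2^n)^2"
    using sum_h[OF assms, of c] unfolding h_def basis_def by (simp add: card_Pow)
  also have "\<dots> = (((1 + c)/2)^n + ((1 - c)/2)^n + c^n)/2"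
    by (simp add: power_divide power2_eq_square field_simps)
  finally show ?thesis unfolding c_def .
qed



lemma ln_bound2:
  fixes x :: real assumes "0 \<le> x" "x < 1"
  shows "ln (1 - x) \<le> - x - x^2/2"
proof -
  have "(\<lambda>t. ln (1 - t) + t + t^2/2) x \<le> (\<lambda>t. ln (1 - t) + t + t^2/2) 0"
  proof (rule DERIV_nonpos_imp_nonincreasing[OF assms(1)])
    fix t :: real assume t: "0 \<le> t" "t \<le> x"
    then have t1: "t < 1" using assms by simp
    have "((\<lambda>t. ln (1 - t) + t + t^2/2) has_real_derivative (-1/(1-t) + 1 + t)) (at t)"
      using t1 by (auto intro!: derivative_eq_intros simp: field_simps)
    moreover have "-1/(1-t) + 1 + t \<le> 0"
      using t t1 by (simp add: field_simps)
    ultimately show "\<exists>y. ((\<lambda>t. ln (1 - t) + t + t^2/2) has_real_derivative y) (at t) \<and> y \<le> 0" by blast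
  qed
  then show ?thesis by simp
qed

definition psi :: "real \<Rightarrow> real" where
  "psi x = ln (1 - x/2) + (2/x - 2) * ln (1 - x)"

lemma psi_mono:
  fixes a b :: real assumes "0 < a" "a \<le> b" "b \<le> 1/4"
  shows "psi a \<le> psi b"
proof (rule DERIV_nonneg_imp_nondecreasing[OF assms(2)])
  fix x :: real assume x: "a \<le> x" "x \<le> b"
  then have x0: "0 < x" and x1: "x \<le> 1/4" using assms by auto
  have d: "(psi has_real_derivative (-1/(2-x) - 2 * ln (1-x) / x^2 - 2/x)) (at x)"
  proof -
    have "(psi has_real_derivative ((-1/2)/(1-x/2) + (-2/x^2) * ln (1-x) + (2/x-2) * (-1/(1-x)))) (at x)"
      unfolding psi_def using x0 x1
      by (auto intro!: derivative_eq_intros simp: power2_eq_square)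
    moreover have "(-1/2)/(1-x/2) = -1/(2-x)"
      using x0 x1 by (simp add: field_simps)
    moreover have "(2/x-2) * (-1/(1-x)) = - 2/x"
      using x0 x1 by (simp add: field_simps)
    moreover have "(-2/x^2) * ln (1-x) = - 2 * ln (1-x) / x^2" by simp
    ultimately show ?thesis by simp
  qed
  have l: "ln (1 - x) \<le> - x - x^2/2" using ln_bound2[of x] x0 x1 by simp
  have "-2 * ln (1-x) / x^2 \<ge> (2*x + x^2) / x^2"
    using l x0 by (intro divide_right_mono) auto
  also have "(2*x + x^2) / x^2 = 2/x + 1" using x0 by (simp add: field_simps power2_eq_square)
  finally have f1: "-2 * ln (1-x) / x^2 \<ge> 2/x + 1" .
  have "1/(2-x) \<le> 1" using x1 by (simp add: field_simps)
  with f1 have "-1/(2-x) - 2 * ln (1-x) / x^2 - 2/x \<ge> 0" by simp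
  with d show "\<exists>y. (psi has_real_derivative y) (at x) \<and> y \<ge> 0" by blast
qed

definition tt :: "nat \<Rightarrow> real" where
  "tt k = 1/2 * (1 - 1 / (8 * real k)) * (1 - 1 / (4 * real k)) ^ (8 * k - 2)"

lemma tt_psi: assumes "k \<ge> 1" shows "tt k = exp (psi (1 / (4 * real k))) / 2"
proof -
  have k: "real k \<ge> 1" using assms by simp
  have e1: "exp (ln (1 - 1 / (4 * real k) / 2)) = 1 - 1 / (8 * real k)"
    using k by (simp add: field_simps)
  have r: "2 / (1 / (4 * real k)) - 2 = real (8 * k - 2)" using assms by (simp add: of_nat_diff)
  have e2: "exp ((2 / (1 / (4 * real k)) - 2) * ln (1 - 1 / (4 * real k))) = (1 - 1 / (4 * real k)) ^ (8 * k - 2)"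
  proof -
    have pos: "0 < 1 - 1 / (4 * real k)" using k by (simp add: field_simps)
    show ?thesis unfolding r using pos by (simp add: ln_realpow[symmetric])
  qed
  show ?thesis unfolding tt_def psi_def exp_add e1 e2 by simp
qed

lemma tt_dec: assumes "m \<ge> 1" shows "tt (Suc m) \<le> tt m"
proof -
  have "psi (1 / (4 * real (Suc m))) \<le> psi (1 / (4 * real m))"
    using assms by (intro psi_mono) (auto simp: field_simps)
  then show ?thesis using assms by (simp add: tt_psi)
qed

lemma tt_lim: "tt \<longlonglongrightarrow> exp (-2) / 2"
  unfolding tt_def by real_asymp

lemma tt_ge: assumes "k \<ge> 1" shows "exp (-2) / 2 \<le> tt k"
proof -
  have "decseq (\<lambda>m. tt (Suc m))"
    by (rule decseq_SucI) (use tt_dec in auto)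
  moreover have "(\<lambda>m. tt (Suc m)) \<longlonglongrightarrow> exp (-2) / 2"
    using tt_lim by (rule LIMSEQ_Suc)
  ultimately have "exp (-2) / 2 \<le> tt (Suc (k - 1))" by (rule decseq_ge)
  then show ?thesis using assms by simp
qed

lemma bound7_eq: "bound7 k = tt k + 1/2 * (2/3) ^ (8 * k) + 1 / (3 * real k)"
  unfolding bound7_def tt_def by simp

lemma bound7_dec: assumes "m \<ge> 1" shows "bound7 (Suc m) \<le> bound7 m"
proof -
  have a: "(2/3::real) ^ (8 * Suc m) \<le> (2/3) ^ (8 * m)"
    by (rule power_decreasing) auto
  have b: "1 / (3 * real (Suc m)) \<le> 1 / (3 * real m)"
    using assms by (simp add: field_simps)
  show ?thesis unfolding bound7_eq using tt_dec[OF assms] a b by linarith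
qed

lemma bound7_lim: "bound7 \<longlonglongrightarrow> 1 / (2 * exp 2)"
proof -
  have "bound7 \<longlonglongrightarrow> exp (- 2) / 2"
  unfolding bound7_def by real_asymp
  then show ?thesis by (simp add: exp_minus field_simps)
qed



lemma h_bound:
  fixes y :: real assumes "0 \<le> y" "y \<le> 1"
  shows "((1+y)/2)^8/2 + y^8/2 - y^6 \<le> 1/16"
proof (cases "y \<le> 1/2")
  case True
  have e: "1/16 - (((1+y)/2)^8/2 + y^8/2 - y^6) = (31/2) * y^0 * (1/2 - y)^8 + (122/1) * y^1 * (1/2 - y)^7 + (833/2) * y^2 * (1/2 - y)^6 + (1603/2) * y^3 * (1/2 - y)^5 + (15085/16) * y^4 * (1/2 - y)^4 + (5467/8) * y^5 * (1/2 - y)^3 + (9361/32) * y^6 * (1/2 - y)^2 + (2165/32) * y^7 * (1/2 - y)^1 + (3423/512) * y^8 * (1/2 - y)^0"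
    by (simp add: field_simps eval_nat_numeral)
  have "0 \<le> (31/2) * y^0 * (1/2 - y)^8 + (122/1) * y^1 * (1/2 - y)^7 + (833/2) * y^2 * (1/2 - y)^6 + (1603/2) * y^3 * (1/2 - y)^5 + (15085/16) * y^4 * (1/2 - y)^4 + (5467/8) * y^5 * (1/2 - y)^3 + (9361/32) * y^6 * (1/2 - y)^2 + (2165/32) * y^7 * (1/2 - y)^1 + (3423/512) * y^8 * (1/2 - y)^0"
    using assms True by (intro add_nonneg_nonneg mult_nonneg_nonneg zero_le_power) auto
  then show ?thesis using e by linarith
next
  case False
  have e: "1/16 - (((1+y)/2)^8/2 + y^8/2 - y^6) = (3423/512) * (y - 1/2)^0 * (1 - y)^8 + (629/16) * (y - 1/2)^1 * (1 - y)^7 + (753/8) * (y - 1/2)^2 * (1 - y)^6 + (139/1) * (y - 1/2)^3 * (1 - y)^5 + (205/1) * (y - 1/2)^4 * (1 - y)^4 + (304/1) * (y - 1/2)^5 * (1 - y)^3 + (288/1) * (y - 1/2)^6 * (1 - y)^2 + (128/1) * (y - 1/2)^7 * (1 - y)^1 + (16/1) * (y - 1/2)^8 * (1 - y)^0"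
    by (simp add: field_simps eval_nat_numeral)
  have "0 \<le> (3423/512) * (y - 1/2)^0 * (1 - y)^8 + (629/16) * (y - 1/2)^1 * (1 - y)^7 + (753/8) * (y - 1/2)^2 * (1 - y)^6 + (139/1) * (y - 1/2)^3 * (1 - y)^5 + (205/1) * (y - 1/2)^4 * (1 - y)^4 + (304/1) * (y - 1/2)^5 * (1 - y)^3 + (288/1) * (y - 1/2)^6 * (1 - y)^2 + (128/1) * (y - 1/2)^7 * (1 - y)^1 + (16/1) * (y - 1/2)^8 * (1 - y)^0"
    using assms False by (intro add_nonneg_nonneg mult_nonneg_nonneg zero_le_power) auto
  then show ?thesis using e by linarith
qed


lemma pm_le:
  fixes q :: real assumes "0 \<le> q" "q \<le> 1"
  shows "((1+q)/2)^k \<le> (1 + q^k)/2"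
proof (induction k)
  case 0 then show ?case by simp
next
  case (Suc k)
  have "((1+q)/2)^Suc k = ((1+q)/2)^k * ((1+q)/2)" by simp
  also have "\<dots> \<le> (1 + q^k)/2 * ((1+q)/2)"
    using Suc assms by (intro mult_right_mono) auto
  also have "\<dots> \<le> (1 + q^Suc k)/2"
  proof -
    have "q^k \<le> 1" using assms by (simp add: power_le_one)
    then have "0 \<le> (1 - q) * (1 - q^k)" using assms by simp
    then show ?thesis by (simp add: algebra_simps)
  qed
  finally show ?case .
qed

lemma exp2_bound: "1/16 \<le> exp (-2::real) / 2"
proof -
  have e: "exp (1::real) < 272/100" by (rule e_less_272)
  have "exp (2::real) = exp 1 * exp 1" by (simp flip: exp_add)
  also have "\<dots> \<le> 272/100 * (272/100)"
    using e by (intro mult_mono) auto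
  finally have "exp (2::real) \<le> 8" by simp
  then show ?thesis by (simp add: exp_minus field_simps)
qed

lemma ineq_main:
  fixes q :: real and k :: nat
  assumes "0 \<le> q" "q \<le> 1" "k \<ge> 1"
  defines "Fv \<equiv> 1/2 * ((1+q)/2)^(8*k) + 1/2 * ((1-q)/2)^(8*k) + 1/2 * q^(8*k)"
  shows "0 \<le> Fv - q^(6*k) \<and> Fv - q^(6*k) < bound7 k"
proof
  define A where "A = (1+q)/2"
  have A0: "0 \<le> A" using assms unfolding A_def by simp
  have qA: "q \<le> A^2"
  proof -
    have "A^2 - q = ((1-q)/2)^2" unfolding A_def by (simp add: power2_eq_square field_simps)
    moreover have "0 \<le> ((1-q)/2)^2" by simp
    ultimately show ?thesis by linarith
  qed
  show "0 \<le> Fv - q^(6*k)"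
  proof -
    let ?u = "A^(4*k)" and ?v = "q^(4*k)"
    have amgm: "?u * ?v \<le> 1/2 * ?u^2 + 1/2 * ?v^2"
    proof -
      have "1/2 * ?u^2 + 1/2 * ?v^2 - ?u * ?v = 1/2 * (?u - ?v)^2"
        by (simp add: power2_eq_square algebra_simps)
      moreover have "0 \<le> 1/2 * (?u - ?v)^2" by simp
      ultimately show ?thesis by linarith
    qed
    have "q^(2*k) \<le> A^(4*k)"
    proof -
      have "q^(2*k) \<le> (A^2)^(2*k)" using qA assms by (intro power_mono) auto
      then show ?thesis by (simp add: power_mult[symmetric] mult.assoc)
    qed
    then have "q^(2*k) * q^(4*k) \<le> ?u * ?v"
      using assms by (intro mult_right_mono) auto
    then have "q^(6*k) \<le> ?u * ?v" by (simp add: power_add[symmetric])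
    moreover have "?u^2 = A^(8*k)" "?v^2 = q^(8*k)"
      by (simp_all add: power_mult[symmetric] mult.commute)
    moreover have "0 \<le> ((1-q)/2)^(8*k)" using assms by simp
    ultimately show ?thesis using amgm unfolding Fv_def A_def by linarith
  qed
  show "Fv - q^(6*k) < bound7 k"
  proof -
    define y where "y = q^k"
    have y: "0 \<le> y" "y \<le> 1" unfolding y_def using assms by (auto simp: power_le_one)
    have "A^(8*k) \<le> ((1+y)/2)^8"
    proof -
      have "A^k \<le> (1+y)/2" unfolding A_def y_def using pm_le assms by simp
      then have "(A^k)^8 \<le> ((1+y)/2)^8" using A0 by (intro power_mono) auto
      then show ?thesis by (simp add: power_mult[symmetric] mult.commute)
    qed
    moreover have "q^(8*k) = y^8" "q^(6*k) = y^6"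
      unfolding y_def by (simp_all add: power_mult[symmetric] mult.commute)
    ultimately have "1/2 * A^(8*k) + 1/2 * q^(8*k) - q^(6*k) \<le> 1/16"
      using h_bound[OF y] by linarith
    moreover have "((1-q)/2)^(8*k) < (2/3)^(8*k)"
      using assms by (intro power_strict_mono) auto
    moreover have "1/16 \<le> tt k" using exp2_bound tt_ge[OF assms(3)] by linarith
    moreover have "0 < 1 / (3 * real k)" using assms by simp
    ultimately show ?thesis unfolding Fv_def bound7_eq A_def by linarith
  qed
qed


theorem mainTheorem7:
  fixes k :: nat and p :: real
  assumes "k \<ge> 1" and "0 \<le> p" and "p \<le> 3/4"
  shows "Im (fidelity_full (8 * k) p) = 0
       \<and> 0 \<le> Re (fidelity_full (8 * k) p) - F_est k p
       \<and> Re (fidelity_full (8 * k) p) - F_est k p < bound7 k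
       \<and> (\<forall>m\<ge>1. bound7 (Suc m) \<le> bound7 m)
       \<and> (bound7 \<longlonglongrightarrow> 1 / (2 * exp 2))"
proof -
  define c where "c = 1 - 4*p/3"
  have c01: "0 \<le> c" "c \<le> 1" unfolding c_def using assms by auto
  have n1: "8 * k \<ge> 1" using assms by simp
  have F: "fidelity_full (8 * k) p = complex_of_real
     (1/2 * ((1+c)/2)^(8*k) + 1/2 * ((1-c)/2)^(8*k) + 1/2 * c^(8*k))"
    unfolding fidelity_closed[OF n1] c_def by (simp add: field_simps)
  have Fe: "F_est k p = c^(6*k)" unfolding F_est_def c_def by (simp add: field_simps)
  have I: "0 \<le> (1/2 * ((1+c)/2)^(8*k) + 1/2 * ((1-c)/2)^(8*k) + 1/2 * c^(8*k)) - c^(6*k)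
      \<and> (1/2 * ((1+c)/2)^(8*k) + 1/2 * ((1-c)/2)^(8*k) + 1/2 * c^(8*k)) - c^(6*k) < bound7 k"
    using ineq_main[OF c01 assms(1)] by simp
  show ?thesis
    unfolding F Fe using I bound7_dec bound7_lim by simp
qed

end
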